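(* Let $p$ be a prime and $G$ a residually $p$-finite group. Then every cyclic subgroup of $G$ is topologically $p$-embedded in $G$.
   Context: A group is $p$-finite if its order is a finite power of $p$; a group $G$ is residually $p$-finite if for every $g\ne 1$ in $G$ there is a $p$-finite quotient of $G$ in which the image of $g$ is nontrivial. A subgroup $H$ of $G$ is topologically $p$-embedded in $G$ if the subspace topology on $H$ induced by the pro-$p$ topology on $G$ equals the pro-$p$ topology of $H$; equivalently, for every normal subgroup $N$ of $H$ of $p$-power index there is a normal subgroup $M$ of $G$ of $p$-power index with $M\cap H\le N$. *)

theory Defs
  imports "HOL-Algebra.Algebra"
begin

definition p_finite :: "nat \<Rightarrow> ('a, 'b) monoid_scheme \<Rightarrow> bool" where
  "p_finite p H \<longleftrightarrow> finite (carrier H) \<and> (\<exists>k::nat. card (carrier H) = p ^ k)"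

definition p_index_normal :: "nat \<Rightarrow> ('a, 'b) monoid_scheme \<Rightarrow> 'a set \<Rightarrow> bool" where
  "p_index_normal p G N \<longleftrightarrow> N \<lhd> G \<and> p_finite p (G Mod N)"

definition residually_p_finite :: "nat \<Rightarrow> ('a, 'b) monoid_scheme \<Rightarrow> bool" where
  "residually_p_finite p G \<longleftrightarrow>
     (\<forall>g \<in> carrier G. g \<noteq> \<one>\<^bsub>G\<^esub> \<longrightarrow>
        (\<exists>N. N \<lhd> G \<and> p_finite p (G Mod N) \<and> N #>\<^bsub>G\<^esub> g \<noteq> \<one>\<^bsub>G Mod N\<^esub>))"

definition top_p_embedded :: "nat \<Rightarrow> ('a, 'b) monoid_scheme \<Rightarrow> 'a set \<Rightarrow> bool" where
  "top_p_embedded p G H \<longleftrightarrow>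
     (\<forall>N. p_index_normal p (G\<lparr>carrier := H\<rparr>) N \<longrightarrow>
        (\<exists>M. p_index_normal p G M \<and> M \<inter> H \<subseteq> N))"

end

theory Submission
  imports Defs
begin

lemma quot_key:
  fixes K :: "('a, 'b) monoid_scheme" and p :: nat
  assumes pr: "Factorial_Ring.prime p" and N: "N \<lhd> K" and pf: "p_finite p (K Mod N)"
    and x: "x \<in> carrier K"
  shows "\<exists>j. \<forall>i::int. (x [^]\<^bsub>K\<^esub> i \<in> N) = (int (p ^ j) dvd i)"
proof -
  interpret normal N K by (rule N)
  have QG: "group (K Mod N)" by (rule factorgroup_is_group)
  from pf obtain l where l: "card (carrier (K Mod N)) = p ^ l" unfolding p_finite_def by blast
  have hom: "(\<lambda>a. N #>\<^bsub>K\<^esub> a) \<in> hom K (K Mod N)" by (rule r_coset_hom_Mod)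
  have u: "N #>\<^bsub>K\<^esub> x \<in> carrier (K Mod N)" using hom x by (auto simp: hom_def)
  have "group.ord (K Mod N) (N #>\<^bsub>K\<^esub> x) dvd order (K Mod N)"
    using group.ord_dvd_group_order[OF QG u] .
  hence "group.ord (K Mod N) (N #>\<^bsub>K\<^esub> x) dvd p ^ l" using l by (simp add: order_def)
  then obtain j where j: "group.ord (K Mod N) (N #>\<^bsub>K\<^esub> x) = p ^ j"
    using divides_primepow[OF pr] by (metis normalize_nat_def id_apply)
  have "(x [^]\<^bsub>K\<^esub> i \<in> N) = (int (p ^ j) dvd i)" for i :: int
  proof -
    have xi: "x [^]\<^bsub>K\<^esub> i \<in> carrier K" using x by simp
    have "N #>\<^bsub>K\<^esub> (x [^]\<^bsub>K\<^esub> i) = (N #>\<^bsub>K\<^esub> x) [^]\<^bsub>K Mod N\<^esub> i"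
      using hom_int_pow[OF hom x is_group QG] .
    hence "(x [^]\<^bsub>K\<^esub> i \<in> N) = ((N #>\<^bsub>K\<^esub> x) [^]\<^bsub>K Mod N\<^esub> i = \<one>\<^bsub>K Mod N\<^esub>)"
      using coset_join1[OF _ xi subgroup_axioms] coset_join2[OF xi subgroup_axioms] by auto
    also have "\<dots> = (int (p ^ j) dvd i)"
      using group.int_pow_eq_id[OF QG u] j by simp
    finally show ?thesis .
  qed
  thus ?thesis by blast
qed

lemma carrier_Mod_self:
  assumes "group G"
  shows "p_index_normal p G (carrier G)"
proof -
  interpret group G by (rule assms)
  have "rcosets\<^bsub>G\<^esub> (carrier G) = {carrier G}"
  proof -
    have "carrier G #>\<^bsub>G\<^esub> x = carrier G" if "x \<in> carrier G" for x
      using coset_join2[OF that subgroup_self that] .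
    hence "rcosets\<^bsub>G\<^esub> (carrier G) = (\<lambda>x. carrier G #>\<^bsub>G\<^esub> x) ` carrier G"
      unfolding RCOSETS_def by auto
    also have "\<dots> = {carrier G}"
      using \<open>\<And>x. x \<in> carrier G \<Longrightarrow> carrier G #>\<^bsub>G\<^esub> x = carrier G\<close> one_closed by force
    finally show ?thesis .
  qed
  hence "card (carrier (G Mod carrier G)) = p ^ 0" by (simp add: FactGroup_def)
  moreover have "finite (carrier (G Mod carrier G))"
    using \<open>rcosets\<^bsub>G\<^esub> (carrier G) = {carrier G}\<close> by (simp add: FactGroup_def)
  ultimately show ?thesis unfolding p_index_normal_def p_finite_def
    using normal_self by blast
qed

theorem lemma3p8:
  fixes G :: "('a, 'b) monoid_scheme" and p :: nat
  assumes "Factorial_Ring.prime p"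
    and "group G"
    and "residually_p_finite p G"
    and "g \<in> carrier G"
  shows "top_p_embedded p G (generate G {g})"
proof -
  interpret group G by (rule assms(2))
  define H where "H = generate G {g}"
  have sub: "subgroup H G" unfolding H_def using assms(4) by (intro generate_is_subgroup) auto
  have gH: "g \<in> H" unfolding H_def by (rule generate.incl) simp
  have Hpow: "H = {g [^]\<^bsub>G\<^esub> (k::int) | k. k \<in> UNIV}" unfolding H_def by (rule generate_pow[OF assms(4)])
  have p1: "p > 1" using assms(1) prime_gt_1_nat by blast
  show ?thesis unfolding top_p_embedded_def H_def[symmetric]
  proof (intro allI impI)
    fix N assume "p_index_normal p (G\<lparr>carrier := H\<rparr>) N"
    hence Nn: "N \<lhd> G\<lparr>carrier := H\<rparr>" and Nf: "p_finite p (G\<lparr>carrier := H\<rparr> Mod N)"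
      unfolding p_index_normal_def by auto
    from quot_key[OF assms(1) Nn Nf] gH obtain c where
      c0: "\<And>i::int. (g [^]\<^bsub>G\<lparr>carrier := H\<rparr>\<^esub> i \<in> N) = (int (p ^ c) dvd i)" by auto
    have c: "\<And>i::int. (g [^]\<^bsub>G\<^esub> i \<in> N) = (int (p ^ c) dvd i)"
      using c0 int_pow_consistent[OF sub gH] by simp
    have suff: "\<exists>M. p_index_normal p G M \<and> M \<inter> H \<subseteq> N"
      if M: "p_index_normal p G M" "\<And>i::int. g [^]\<^bsub>G\<^esub> i \<in> M \<Longrightarrow> int (p ^ c) dvd i" for M
    proof (intro exI conjI)
      show "p_index_normal p G M" by (rule M(1))
      show "M \<inter> H \<subseteq> N"
      proof
        fix z assume "z \<in> M \<inter> H"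
        then obtain i where z: "z = g [^]\<^bsub>G\<^esub> (i::int)" "z \<in> M" using Hpow by auto
        thus "z \<in> N" using M(2) c by auto
      qed
    qed
    show "\<exists>M. p_index_normal p G M \<and> M \<inter> H \<subseteq> N"
    proof (cases "c = 0")
      case True
      show ?thesis by (rule suff[OF carrier_Mod_self[OF assms(2)]]) (simp add: True)
    next
      case False
      define x where "x = g [^]\<^bsub>G\<^esub> (p ^ (c - 1))"
      have xc: "x \<in> carrier G" unfolding x_def using assms(4) by simp
      have ndvd: "\<not> p ^ c dvd p ^ (c - 1)"
        using p1 False by (simp add: dvd_power_iff_le)
      have xN: "x \<notin> N"
      proof
        assume "x \<in> N"
        hence "g [^]\<^bsub>G\<^esub> (int (p ^ (c - 1))) \<in> N" unfolding x_def by (simp only: int_pow_int)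
        hence "int (p ^ c) dvd int (p ^ (c - 1))" using c by blast
        thus False using ndvd by (simp only: of_nat_dvd_iff)
      qed
      have "\<one>\<^bsub>G\<^esub> \<in> N"
        using subgroup.one_closed[OF normal_imp_subgroup[OF Nn]] by simp
      hence "x \<noteq> \<one>\<^bsub>G\<^esub>" using xN by auto
      with assms(3) xc obtain M where M: "M \<lhd> G" "p_finite p (G Mod M)" "M #>\<^bsub>G\<^esub> x \<noteq> \<one>\<^bsub>G Mod M\<^esub>"
        unfolding residually_p_finite_def by blast
      have xM: "x \<notin> M"
        using M(1) M(3) coset_join2[OF xc] normal_imp_subgroup by fastforce
      from quot_key[OF assms(1) M(1) M(2) assms(4)] obtain j where
        j: "\<And>i::int. (g [^]\<^bsub>G\<^esub> i \<in> M) = (int (p ^ j) dvd i)" by auto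
      have "\<not> int (p ^ j) dvd int (p ^ (c - 1))"
        using j[of "int (p ^ (c - 1))"] xM int_pow_int[of G g "p ^ (c - 1)"] unfolding x_def by simp
      hence "\<not> p ^ j dvd p ^ (c - 1)" by (metis of_nat_dvd_iff)
      hence "j > c - 1" using p1 by (simp add: dvd_power_iff_le)
      hence "p ^ c dvd p ^ j" using False p1 by (simp add: dvd_power_iff_le)
      hence dv: "int (p ^ c) dvd int (p ^ j)" by (simp only: of_nat_dvd_iff)
      show ?thesis
      proof (rule suff)
        show "p_index_normal p G M" unfolding p_index_normal_def using M by simp
        fix i :: int assume "g [^]\<^bsub>G\<^esub> i \<in> M"
        thus "int (p ^ c) dvd i" using j dv dvd_trans by blast
      qed
    qed
  qed
qed

end
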